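(* Let $p$ be an odd prime, $n$ a positive integer with $\gcd(n,p)=1$, and let $S$ be a totally isotropic simultaneously negacyclic subspace of $\mathbb{F}_p^n\times\mathbb{F}_p^n$. Then the stabilizer code $\mathcal{C}(S)$ is linear if and only if the image of $S$ under $(\mathbf{a},\mathbf{b})\mapsto\mathbf{a}+\eta\mathbf{b}$ is an ideal of $\mathcal{R}(\eta)=\mathbb{F}_p(\eta)[X]/\langle X^n+1\rangle$. Moreover, if $\mathcal{C}(S)$ is linear, then the image of the symplectic dual $S^{\perp}$ is also an ideal of $\mathcal{R}(\eta)$.
   Context: Let $N:\mathbb{F}_p^n\to\mathbb{F}_p^n$ be $(u_0,\dots,u_{n-1})\mapsto(-u_{n-1},u_0,\dots,u_{n-2})$; $S$ is simultaneously negacyclic if $(\mathbf{a},\mathbf{b})\in S$ implies $(N\mathbf{a},N\mathbf{b})\in S$. The symplectic inner product is $\langle(\mathbf{a},\mathbf{b}),(\mathbf{c},\mathbf{d})\rangle_s=\mathbf{a}^T\mathbf{d}-\mathbf{b}^T\mathbf{c}$; $S$ is totally isotropic if it vanishes on $S\times S$; $S^\perp$ is the symplectic dual. $\mathcal{C}(S)$ denotes the quantum stabilizer code (in $(\mathbb{C}^p)^{\otimes n}$) associated to $S$. Let $\eta$ be a root of an irreducible quadratic polynomial over $\mathbb{F}_p$, so $\mathbb{F}_{p^2}=\mathbb{F}_p(\eta)$; the map $(\mathbf{a},\mathbf{b})\mapsto\mathbf{a}+\eta\mathbf{b}$ identifies $\mathbb{F}_p^n\times\mathbb{F}_p^n$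 with $\mathbb{F}_{p^2}^n$, and (via vector-to-polynomial identification $(a_0,\dots,a_{n-1})\mapsto\sum a_iX^i$) with $\mathcal{R}(\eta)$. The code $\mathcal{C}(S)$ is called linear if the image of $S$ in $\mathbb{F}_{p^2}^n$ is an $\mathbb{F}_{p^2}$-subspace. *)

theory Defs
  imports "HOL-Computational_Algebra.Polynomial" "HOL-Library.Cardinality"
begin

text \<open>The field F_p(eta) = F_{p^2} is a finite field type 'k with
  CARD('k) = p^2; F_p is its prime subfield (the image of the naturals).
  Vectors of length n are functions nat => 'k vanishing from index n on.\<close>

definition Fp :: "'k::field set" where
  "Fp = range (of_nat :: nat \<Rightarrow> 'k)"

definition vecs :: "nat \<Rightarrow> 'k::field set \<Rightarrow> (nat \<Rightarrow> 'k) set" where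
  "vecs n A = {v. (\<forall>i. v i \<in> A) \<and> (\<forall>i\<ge>n. v i = 0)}"

definition root_of_irred_quadratic :: "'k::field \<Rightarrow> bool" where
  "root_of_irred_quadratic eta \<longleftrightarrow>
     (\<exists>c0\<in>Fp. \<exists>c1\<in>Fp. eta^2 + c1 * eta + c0 = 0 \<and> (\<forall>x\<in>Fp. x^2 + c1 * x + c0 \<noteq> 0))"

definition Fp_subspace :: "nat \<Rightarrow> ((nat \<Rightarrow> 'k::field) \<times> (nat \<Rightarrow> 'k)) set \<Rightarrow> bool" where
  "Fp_subspace n S \<longleftrightarrow> S \<subseteq> vecs n Fp \<times> vecs n Fp \<and> (\<lambda>i. 0, \<lambda>i. 0) \<in> S \<and>
     (\<forall>x\<in>S. \<forall>y\<in>S. (\<lambda>i. fst x i + fst y i, \<lambda>i. snd x i + snd y i) \<in> S) \<and>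
     (\<forall>c\<in>Fp. \<forall>x\<in>S. (\<lambda>i. c * fst x i, \<lambda>i. c * snd x i) \<in> S)"

definition negashift :: "nat \<Rightarrow> (nat \<Rightarrow> 'k::ring_1) \<Rightarrow> nat \<Rightarrow> 'k" where
  "negashift n u i = (if i = 0 then - u (n - 1) else if i < n then u (i - 1) else 0)"

definition simul_negacyclic :: "nat \<Rightarrow> ((nat \<Rightarrow> 'k::ring_1) \<times> (nat \<Rightarrow> 'k)) set \<Rightarrow> bool" where
  "simul_negacyclic n S \<longleftrightarrow> (\<forall>(a, b)\<in>S. (negashift n a, negashift n b) \<in> S)"

definition symp :: "nat \<Rightarrow> (nat \<Rightarrow> 'k::comm_ring_1) \<times> (nat \<Rightarrow> 'k) \<Rightarrow> (nat \<Rightarrow> 'k) \<times> (nat \<Rightarrow> 'k) \<Rightarrow> 'k" where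
  "symp n x y = (\<Sum>i<n. fst x i * snd y i) - (\<Sum>i<n. snd x i * fst y i)"

definition totally_isotropic :: "nat \<Rightarrow> ((nat \<Rightarrow> 'k::comm_ring_1) \<times> (nat \<Rightarrow> 'k)) set \<Rightarrow> bool" where
  "totally_isotropic n S \<longleftrightarrow> (\<forall>x\<in>S. \<forall>y\<in>S. symp n x y = 0)"

definition symp_dual :: "nat \<Rightarrow> ((nat \<Rightarrow> 'k::field) \<times> (nat \<Rightarrow> 'k)) set \<Rightarrow> ((nat \<Rightarrow> 'k) \<times> (nat \<Rightarrow> 'k)) set" where
  "symp_dual n S = {y \<in> vecs n Fp \<times> vecs n Fp. \<forall>x\<in>S. symp n x y = 0}"

definition to_Fp2 :: "'k::field \<Rightarrow> (nat \<Rightarrow> 'k) \<times> (nat \<Rightarrow> 'k) \<Rightarrow> nat \<Rightarrow> 'k" where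
  "to_Fp2 eta x = (\<lambda>i. fst x i + eta * snd x i)"

text \<open>C(S) is linear iff the image of S in F_{p^2}^n is an F_{p^2}-subspace.\<close>
definition code_linear :: "nat \<Rightarrow> 'k::field \<Rightarrow> ((nat \<Rightarrow> 'k) \<times> (nat \<Rightarrow> 'k)) set \<Rightarrow> bool" where
  "code_linear n eta S \<longleftrightarrow> (let V = to_Fp2 eta ` S in
     (\<lambda>i. 0) \<in> V \<and> (\<forall>u\<in>V. \<forall>v\<in>V. (\<lambda>i. u i + v i) \<in> V) \<and> (\<forall>c::'k. \<forall>v\<in>V. (\<lambda>i. c * v i) \<in> V))"

text \<open>R(eta) = F_p(eta)[X]/(X^n+1), elements represented by their canonical
  representatives: polynomials of degree < n (n > 0).\<close>
definition negacyc_modulus :: "nat \<Rightarrow> 'k::field poly" where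
  "negacyc_modulus n = monom 1 n + 1"

definition R_carrier :: "nat \<Rightarrow> 'k::field poly set" where
  "R_carrier n = {f. degree f < n}"

definition vec_poly :: "nat \<Rightarrow> (nat \<Rightarrow> 'k::field) \<Rightarrow> 'k poly" where
  "vec_poly n v = (\<Sum>i<n. monom (v i) i)"

definition R_ideal :: "nat \<Rightarrow> 'k::field poly set \<Rightarrow> bool" where
  "R_ideal n I \<longleftrightarrow> I \<subseteq> R_carrier n \<and> 0 \<in> I \<and>
     (\<forall>f\<in>I. \<forall>g\<in>I. f + g \<in> I) \<and> (\<forall>f\<in>I. - f \<in> I) \<and>
     (\<forall>f\<in>I. \<forall>g\<in>R_carrier n. (g * f) mod negacyc_modulus n \<in> I)"

definition image_R :: "nat \<Rightarrow> 'k::field \<Rightarrow> ((nat \<Rightarrow> 'k) \<times> (nat \<Rightarrow> 'k)) set \<Rightarrow> 'k poly set" where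
  "image_R n eta S = (\<lambda>x. vec_poly n (to_Fp2 eta x)) ` S"

end

theory Submission
  imports Defs "HOL-Number_Theory.Number_Theory"
begin

lemma Fp_add: "x \<in> Fp \<Longrightarrow> y \<in> Fp \<Longrightarrow> x + y \<in> (Fp::'k::field set)"
  unfolding Fp_def by (auto simp flip: of_nat_add)

lemma Fp_mult: "x \<in> Fp \<Longrightarrow> y \<in> Fp \<Longrightarrow> x * y \<in> (Fp::'k::field set)"
  unfolding Fp_def by (auto simp flip: of_nat_mult)

lemma Fp_0: "0 \<in> (Fp::'k::field set)" unfolding Fp_def by (metis of_nat_0 rangeI)
lemma Fp_1: "1 \<in> (Fp::'k::field set)" unfolding Fp_def by (metis of_nat_1 rangeI)

lemma Fp_uminus: assumes "x \<in> (Fp::'k::{field,finite} set)" shows "- x \<in> Fp"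
proof -
  obtain a where a: "x = of_nat a" using assms unfolding Fp_def by auto
  define q where "q = CHAR('k)"
  have q: "q > 0" unfolding q_def by (rule finite_imp_CHAR_pos) simp
  have "a \<le> q * a" using q by simp
  hence "(of_nat (q * a - a) :: 'k) + of_nat a = of_nat (q * a)"
    by (simp flip: of_nat_add)
  also have "\<dots> = 0" by (simp add: q_def)
  finally have "(of_nat (q * a - a) :: 'k) = - x" using a by (simp add: eq_neg_iff_add_eq_0)
  thus ?thesis unfolding Fp_def by (metis rangeI)
qed

lemma Fp_diff: "x \<in> Fp \<Longrightarrow> y \<in> Fp \<Longrightarrow> x - y \<in> (Fp::'k::{field,finite} set)"
  using Fp_add[of x "-y"] Fp_uminus[of y] by simp

lemma Fp_inv: assumes "x \<in> (Fp::'k::{field,finite} set)" "x \<noteq> 0"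
  shows "\<exists>y\<in>Fp. x * y = 1"
proof -
  have "(\<lambda>y. x * y) ` Fp = Fp"
    by (rule endo_inj_surj) (auto simp: Fp_mult assms inj_on_def)
  thus ?thesis using Fp_1 by (metis imageE)
qed

lemma card_Fp: assumes "prime p" "CARD('k::{field,finite}) = p ^ 2"
  shows "card (Fp :: 'k set) = p"
proof -
  define q where "q = CHAR('k)"
  have q: "q > 0" unfolding q_def by (rule finite_imp_CHAR_pos) simp
  have qp: "prime q" unfolding q_def using q q_def prime_CHAR_semidom by blast
  have "q dvd p ^ 2" unfolding q_def using CHAR_dvd_CARD[where 'a='k] assms by simp
  hence "q dvd p" using qp prime_dvd_power by blast
  hence qp2: "q = p" using qp assms(1) primes_dvd_imp_eq by blast
  have "Fp = (of_nat ` {..<q} :: 'k set)"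
  proof
    show "Fp \<subseteq> (of_nat ` {..<q} :: 'k set)"
    proof
      fix x :: 'k assume "x \<in> Fp"
      then obtain a where a: "x = of_nat a" unfolding Fp_def by auto
      have "(of_nat a :: 'k) = of_nat (a mod q)"
        unfolding of_nat_eq_iff_cong_CHAR q_def by (simp add: cong_def)
      moreover have "a mod q < q" using q by simp
      ultimately show "x \<in> of_nat ` {..<q}" using a by blast
    qed
  qed (auto simp: Fp_def)
  moreover have "inj_on (of_nat :: nat \<Rightarrow> 'k) {..<q}"
    unfolding inj_on_def of_nat_eq_iff_cong_CHAR q_def[symmetric] by (auto simp: cong_def)
  ultimately show ?thesis using qp2 by (metis card_image card_lessThan)
qed


lemma eta_unique:
  assumes "root_of_irred_quadratic (eta::'k::{field,finite})"
    and "a \<in> Fp" "b \<in> Fp" "a' \<in> Fp" "b' \<in> Fp" "a + eta * b = a' + eta * b'"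
  shows "a = a' \<and> b = b'"
proof (cases "b = b'")
  case True thus ?thesis using assms(6) by simp
next
  case False
  obtain c0 c1 where c: "c0 \<in> Fp" "c1 \<in> Fp" "eta^2 + c1 * eta + c0 = 0"
    "\<forall>x\<in>Fp. x^2 + c1 * x + c0 \<noteq> 0" using assms(1) unfolding root_of_irred_quadratic_def by blast
  have d: "b - b' \<in> Fp" "b - b' \<noteq> 0" using False assms Fp_diff by auto
  then obtain di where di: "di \<in> Fp" "(b - b') * di = 1" using Fp_inv by blast
  have "eta * (b - b') = a' - a" using assms(6) by (simp add: algebra_simps)
  hence "eta = (a' - a) * di" using di by (metis mult.assoc mult.right_neutral)
  hence "eta \<in> Fp" using Fp_mult Fp_diff assms di by metis
  thus ?thesis using c by blast
qed

lemma eta_decomp: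
  assumes "prime p" "CARD('k::{field,finite}) = p ^ 2" "root_of_irred_quadratic (eta::'k)"
  shows "\<exists>a\<in>Fp. \<exists>b\<in>Fp. z = a + eta * b"
proof -
  let ?F = "\<lambda>(a,b). a + eta * b"
  have inj: "inj_on ?F (Fp \<times> Fp)"
    unfolding inj_on_def using eta_unique[OF assms(3)] by auto
  have "card (?F ` (Fp \<times> Fp)) = p * p"
    using card_image[OF inj] card_Fp[OF assms(1,2)] by (simp add: card_cartesian_product)
  hence "?F ` (Fp \<times> Fp) = UNIV"
    by (intro card_eq_UNIV_imp_eq_UNIV) (auto simp: assms(2) power2_eq_square)
  hence "z \<in> ?F ` (Fp \<times> Fp)" by simp
  thus ?thesis by auto
qed


lemma coeff_vec_poly: "Polynomial.coeff (vec_poly n v) i = (if i < n then v i else 0)"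
  unfolding vec_poly_def by (simp add: coeff_sum coeff_monom)

lemma vec_poly_inj:
  assumes "u \<in> vecs n UNIV" "v \<in> vecs n UNIV" "vec_poly n u = vec_poly n v"
  shows "u = v"
proof
  fix i
  have "Polynomial.coeff (vec_poly n u) i = Polynomial.coeff (vec_poly n v) i" using assms(3) by simp
  thus "u i = v i" using assms(1,2) unfolding vecs_def coeff_vec_poly
    by (cases "i < n") auto
qed

lemma degree_vec_poly: "n > 0 \<Longrightarrow> degree (vec_poly n v) < n"
proof -
  assume n: "n > 0"
  have "degree (vec_poly n v) \<le> n - 1"
    by (rule degree_le) (auto simp: coeff_vec_poly)
  thus ?thesis using n by linarith
qed

lemma vec_poly_add: "vec_poly n (\<lambda>i. u i + v i) = vec_poly n u + vec_poly n v"
  by (rule poly_eqI) (simp add: coeff_vec_poly)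

lemma vec_poly_smult: "vec_poly n (\<lambda>i. c * v i) = Polynomial.smult c (vec_poly n v)"
  by (rule poly_eqI) (simp add: coeff_vec_poly)

lemma vec_poly_0: "vec_poly n (\<lambda>i. 0) = 0"
  by (rule poly_eqI) (simp add: coeff_vec_poly)

lemma degree_modulus: "n > 0 \<Longrightarrow> degree (negacyc_modulus n :: 'k::field poly) = n"
  unfolding negacyc_modulus_def
  by (subst degree_add_eq_left) (auto simp: degree_monom_eq)

lemma coeff_modulus: "n > 0 \<Longrightarrow> Polynomial.coeff (negacyc_modulus n :: 'k::field poly) i =
    (if i = 0 \<or> i = n then 1 else 0)"
  unfolding negacyc_modulus_def by (auto simp: coeff_monom)

lemma negashift_poly:
  assumes "n > 0" "v \<in> vecs n UNIV"
  shows "([:0,1:] * vec_poly n v) mod negacyc_modulus n = vec_poly n (negashift n v)"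
proof -
  have eq: "[:0,1:] * vec_poly n v = Polynomial.smult (v (n-1)) (negacyc_modulus n) + vec_poly n (negashift n v)"
  proof (rule poly_eqI)
    fix i
    show "Polynomial.coeff ([:0,1:] * vec_poly n v) i =
      Polynomial.coeff (Polynomial.smult (v (n-1)) (negacyc_modulus n) + vec_poly n (negashift n v)) i"
    proof (cases i)
      case 0 thus ?thesis using assms by (simp add: coeff_vec_poly coeff_modulus negashift_def coeff_pCons)
    next
      case (Suc j)
      show ?thesis
      proof (cases "Suc j = n")
        case True
        hence j: "j = n - 1" "j < n" "\<not> Suc j < n" "Suc j \<noteq> 0" by auto
        have l: "Polynomial.coeff ([:0,1:] * vec_poly n v) (Suc j) = v j"
          using j(2) by (simp add: coeff_vec_poly coeff_pCons)
        have r: "Polynomial.coeff (Polynomial.smult (v (n-1)) (negacyc_modulus n) + vec_poly n (negashift n v)) (Suc j) = v (n - 1)"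
          using j(3) True assms(1) by (simp add: coeff_vec_poly coeff_modulus)
        show ?thesis using l r j(1) Suc by simp
      next
        case False
        thus ?thesis using Suc assms unfolding vecs_def
          by (auto simp add: coeff_vec_poly coeff_modulus negashift_def coeff_pCons)
      qed
    qed
  qed
  show ?thesis unfolding eq
    by (simp add: mod_poly_less degree_vec_poly degree_modulus assms(1) poly_mod_add_left mod_smult_left)
qed


lemma ideal_of_closed:
  fixes V :: "(nat \<Rightarrow> 'k::field) set"
  assumes n: "n > 0" and sub: "V \<subseteq> vecs n UNIV" and z: "(\<lambda>i. 0) \<in> V"
    and add: "\<And>u v. u \<in> V \<Longrightarrow> v \<in> V \<Longrightarrow> (\<lambda>i. u i + v i) \<in> V"
    and sc: "\<And>c v. v \<in> V \<Longrightarrow> (\<lambda>i. c * v i) \<in> V"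
    and sh: "\<And>v. v \<in> V \<Longrightarrow> negashift n v \<in> V"
  shows "R_ideal n (vec_poly n ` V)"
proof -
  let ?I = "vec_poly n ` V" and ?m = "negacyc_modulus n :: 'k poly"
  have I_add: "f + g \<in> ?I" if "f \<in> ?I" "g \<in> ?I" for f g
    using that add by (auto simp flip: vec_poly_add)
  have I_sc: "Polynomial.smult c f \<in> ?I" if "f \<in> ?I" for f c
    using that sc by (auto simp flip: vec_poly_smult)
  have I_deg: "degree f < n" if "f \<in> ?I" for f
    using that degree_vec_poly n by auto
  have I_X: "([:0,1:] * f) mod ?m \<in> ?I" if fI: "f \<in> ?I" for f
  proof -
    obtain v where v: "v \<in> V" "f = vec_poly n v" using fI by auto
    have "([:0,1:] * f) mod ?m = vec_poly n (negashift n v)"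
      using negashift_poly[OF n] v sub by auto
    thus ?thesis using sh v by auto
  qed
  have I_0: "0 \<in> ?I" using z vec_poly_0 by (metis imageI)
  have mul: "(g * f) mod ?m \<in> ?I" if f: "f \<in> ?I" for f g
  proof (induction g)
    case 0 thus ?case using I_0 by simp
  next
    case (pCons a g)
    have "(pCons a g * f) mod ?m = Polynomial.smult a f mod ?m + ([:0,1:] * (g * f)) mod ?m"
      by (simp add: poly_mod_add_left)
    also have "Polynomial.smult a f mod ?m = Polynomial.smult a f"
      using I_deg[OF f] by (intro mod_poly_less) (simp add: degree_modulus n)
    also have "([:0,1:] * (g * f)) mod ?m = ([:0,1:] * ((g * f) mod ?m)) mod ?m"
      by (simp only: mod_mult_right_eq)
    finally show ?case using I_add I_sc I_X pCons.IH f by simp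
  qed
  show ?thesis unfolding R_ideal_def R_carrier_def
  proof (intro conjI ballI)
    show "?I \<subseteq> {f. degree f < n}" using I_deg by auto
    show "0 \<in> ?I" by (rule I_0)
  next
    fix f g assume "f \<in> ?I" "g \<in> ?I" thus "f + g \<in> ?I" by (rule I_add)
  next
    fix f assume "f \<in> ?I"
    from I_sc[OF this, of "-1"] show "- f \<in> ?I" by simp
  next
    fix f g assume "f \<in> ?I" thus "g * f mod ?m \<in> ?I" by (rule mul)
  qed
qed


definition Npair :: "nat \<Rightarrow> (nat \<Rightarrow> 'k::ring_1) \<times> (nat \<Rightarrow> 'k) \<Rightarrow> (nat \<Rightarrow> 'k) \<times> (nat \<Rightarrow> 'k)" where
  "Npair n x = (negashift n (fst x), negashift n (snd x))"

definition Emul :: "'k::field \<Rightarrow> 'k \<Rightarrow> (nat \<Rightarrow> 'k) \<times> (nat \<Rightarrow> 'k) \<Rightarrow> (nat \<Rightarrow> 'k) \<times> (nat \<Rightarrow> 'k)" where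
  "Emul c0 c1 y = (\<lambda>i. - c0 * snd y i, \<lambda>i. fst y i - c1 * snd y i)"

definition psc :: "'k::field \<Rightarrow> (nat \<Rightarrow> 'k) \<times> (nat \<Rightarrow> 'k) \<Rightarrow> (nat \<Rightarrow> 'k) \<times> (nat \<Rightarrow> 'k)" where
  "psc c y = (\<lambda>i. c * fst y i, \<lambda>i. c * snd y i)"

definition padd :: "(nat \<Rightarrow> 'k::field) \<times> (nat \<Rightarrow> 'k) \<Rightarrow> (nat \<Rightarrow> 'k) \<times> (nat \<Rightarrow> 'k) \<Rightarrow> (nat \<Rightarrow> 'k) \<times> (nat \<Rightarrow> 'k)" where
  "padd x y = (\<lambda>i. fst x i + fst y i, \<lambda>i. snd x i + snd y i)"

lemma sum_negashift:
  assumes "n > 0"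
  shows "(\<Sum>i<n. negashift n u i * negashift n v i) = (\<Sum>i<n. u i * (v i :: 'k::comm_ring_1))"
proof -
  obtain m where m: "n = Suc m" using assms by (cases n) auto
  have "(\<Sum>i<n. negashift n u i * negashift n v i) =
      negashift n u 0 * negashift n v 0 + (\<Sum>i<m. negashift n u (Suc i) * negashift n v (Suc i))"
    unfolding m by (rule sum.lessThan_Suc_shift)
  also have "(\<Sum>i<m. negashift n u (Suc i) * negashift n v (Suc i)) = (\<Sum>i<m. u i * v i)"
    by (rule sum.cong) (auto simp: negashift_def m)
  also have "negashift n u 0 * negashift n v 0 = u m * v m"
    by (simp add: negashift_def m)
  finally show ?thesis unfolding m by (simp add: add.commute)
qed

lemma symp_Npair: "n > 0 \<Longrightarrow> symp n (Npair n x) (Npair n y) = symp n x y"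
  unfolding symp_def Npair_def by (simp add: sum_negashift)

lemma symp_Emul: "symp n s (Emul c0 c1 y) = - symp n (Emul c0 c1 s) y - c1 * symp n s y"
proof -
  have "symp n s (Emul c0 c1 y) = (\<Sum>i<n. fst s i * snd (Emul c0 c1 y) i - snd s i * fst (Emul c0 c1 y) i)"
    unfolding symp_def by (simp add: sum_subtractf)
  also have "\<dots> = (\<Sum>i<n. - (fst (Emul c0 c1 s) i * snd y i - snd (Emul c0 c1 s) i * fst y i)
       - c1 * (fst s i * snd y i - snd s i * fst y i))"
    by (rule sum.cong) (auto simp: Emul_def algebra_simps)
  also have "\<dots> = - symp n (Emul c0 c1 s) y - c1 * symp n s y"
    unfolding symp_def by (simp add: sum_subtractf sum_negf sum_distrib_left right_diff_distrib)
  finally show ?thesis .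
qed

lemma symp_psc: "symp n s (psc c y) = c * symp n s y"
  unfolding symp_def psc_def by (simp add: sum_distrib_left algebra_simps)

lemma symp_padd: "symp n s (padd x y) = symp n s x + symp n s y"
  unfolding symp_def padd_def by (simp add: sum.distrib algebra_simps)

lemma symp_zero: "symp n s (\<lambda>i. 0, \<lambda>i. 0) = 0"
  unfolding symp_def by simp

lemma finite_vecs: "finite (vecs n (UNIV :: 'k::{field,finite} set))"
proof -
  have "vecs n UNIV \<subseteq> (\<lambda>xs i. if i < n then xs ! i else 0) ` {xs. set xs \<subseteq> (UNIV::'k set) \<and> length xs = n}"
  proof
    fix v assume "v \<in> vecs n (UNIV::'k set)"
    hence "v = (\<lambda>i. if i < n then map v [0..<n] ! i else 0)" unfolding vecs_def by auto
    thus "v \<in> (\<lambda>xs i. if i < n then xs ! i else 0) ` {xs. set xs \<subseteq> UNIV \<and> length xs = n}" by force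
  qed
  thus ?thesis by (rule finite_subset) (intro finite_imageI finite_lists_length_eq finite)
qed

lemma negashift_inj:
  assumes "n > 0" "u \<in> vecs n A" "v \<in> vecs n B" "negashift n u = negashift n (v :: nat \<Rightarrow> 'k::field)"
  shows "u = v"
proof
  fix i
  show "u i = v i"
  proof (cases "i < n - 1")
    case True
    have "negashift n u (Suc i) = negashift n v (Suc i)" using assms(4) by simp
    moreover have "Suc i < n" using True by linarith
    ultimately show ?thesis by (simp add: negashift_def)
  next
    case False
    show ?thesis
    proof (cases "i = n - 1")
      case True
      have "negashift n u 0 = negashift n v 0" using assms(4) by simp
      thus ?thesis using True by (simp add: negashift_def)
    next
      case False
      thus ?thesis using assms(2,3) \<open>\<not> i < n - 1\<close> unfolding vecs_def by auto
    qed
  qed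
qed

lemma negashift_vecs: "u \<in> vecs n Fp \<Longrightarrow> negashift n u \<in> vecs n (Fp::'k::{field,finite} set)"
  unfolding vecs_def negashift_def by (auto simp: Fp_uminus Fp_0)


lemma T_vecs: "x \<in> vecs n Fp \<times> vecs n Fp \<Longrightarrow> to_Fp2 eta x \<in> vecs n (UNIV::'k::field set)"
  unfolding vecs_def to_Fp2_def by auto

lemma T_inj:
  assumes "root_of_irred_quadratic (eta::'k::{field,finite})"
    "x \<in> vecs n Fp \<times> vecs n Fp" "y \<in> vecs n Fp \<times> vecs n Fp" "to_Fp2 eta x = to_Fp2 eta y"
  shows "x = y"
proof -
  have "fst x i = fst y i \<and> snd x i = snd y i" for i
  proof (rule eta_unique[OF assms(1)])
    show "fst x i \<in> Fp" "snd x i \<in> Fp" "fst y i \<in> Fp" "snd y i \<in> Fp"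
      using assms(2,3) unfolding vecs_def by auto
    show "fst x i + eta * snd x i = fst y i + eta * snd y i"
      using fun_cong[OF assms(4), of i] unfolding to_Fp2_def by simp
  qed
  thus ?thesis by (simp add: prod_eq_iff fun_eq_iff)
qed

lemma T_N: "to_Fp2 eta (Npair n x) = negashift n (to_Fp2 eta x)"
  unfolding to_Fp2_def Npair_def negashift_def by (auto simp: fun_eq_iff algebra_simps)

lemma T_padd: "to_Fp2 eta (padd x y) = (\<lambda>i. to_Fp2 eta x i + to_Fp2 eta y i)"
  unfolding to_Fp2_def padd_def by (auto simp: fun_eq_iff algebra_simps)

lemma T_psc: "to_Fp2 eta (psc c x) = (\<lambda>i. c * to_Fp2 eta x i)"
  unfolding to_Fp2_def psc_def by (auto simp: fun_eq_iff algebra_simps)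

lemma T_Emul: "eta^2 + c1 * eta + c0 = 0 \<Longrightarrow>
   to_Fp2 eta (Emul c0 c1 x) = (\<lambda>i. eta * to_Fp2 (eta::'k::field) x i)"
proof -
  assume h: "eta^2 + c1 * eta + c0 = 0"
  have e: "c0 * d + (c1 * (eta * d) + eta * (eta * d)) = 0" for d
  proof -
    have "c0 * d + (c1 * (eta * d) + eta * (eta * d)) = (eta^2 + c1*eta + c0) * d"
      by (simp add: algebra_simps power2_eq_square)
    thus ?thesis using h by simp
  qed
  show ?thesis unfolding to_Fp2_def Emul_def
    by (auto simp: fun_eq_iff algebra_simps e)
qed

lemma P_padd: "x \<in> vecs n Fp \<times> vecs n Fp \<Longrightarrow> y \<in> vecs n Fp \<times> vecs n Fp \<Longrightarrow>
   padd x y \<in> vecs n Fp \<times> vecs n (Fp::'k::field set)"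
  unfolding vecs_def padd_def by (auto simp: Fp_add)

lemma P_psc: "c \<in> Fp \<Longrightarrow> x \<in> vecs n Fp \<times> vecs n Fp \<Longrightarrow>
   psc c x \<in> vecs n Fp \<times> vecs n (Fp::'k::field set)"
  unfolding vecs_def psc_def by (auto simp: Fp_mult)

lemma P_Emul: "c0 \<in> Fp \<Longrightarrow> c1 \<in> Fp \<Longrightarrow> x \<in> vecs n Fp \<times> vecs n Fp \<Longrightarrow>
   Emul c0 c1 x \<in> vecs n Fp \<times> vecs n (Fp::'k::{field,finite} set)"
  unfolding vecs_def Emul_def by (auto simp: Fp_mult Fp_diff Fp_uminus)

lemma P_N: "x \<in> vecs n Fp \<times> vecs n Fp \<Longrightarrow> Npair n x \<in> vecs n Fp \<times> vecs n (Fp::'k::{field,finite} set)"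
  unfolding Npair_def using negashift_vecs by auto


theorem mainTheorem6:
  fixes S :: "((nat \<Rightarrow> 'k::{field,finite}) \<times> (nat \<Rightarrow> 'k)) set"
    and p n :: nat and eta :: 'k
  assumes "prime p" and "odd p" and "CARD('k) = p ^ 2"
    and "n > 0" and "coprime n p"
    and "root_of_irred_quadratic eta"
    and "Fp_subspace n S" and "totally_isotropic n S" and "simul_negacyclic n S"
  shows "(code_linear n eta S \<longleftrightarrow> R_ideal n (image_R n eta S)) \<and>
         (code_linear n eta S \<longrightarrow> R_ideal n (image_R n eta (symp_dual n S)))"
proof -
  note p = assms(1) and card = assms(3) and n = assms(4) and eta = assms(6)
  let ?P = "vecs n (Fp::'k set) \<times> vecs n (Fp::'k set)"
  let ?T = "to_Fp2 eta"
  have SP: "S \<subseteq> ?P" and S0: "(\<lambda>i. 0, \<lambda>i. 0) \<in> S"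
    and Sadd: "\<And>x y. x \<in> S \<Longrightarrow> y \<in> S \<Longrightarrow> padd x y \<in> S"
    using assms(7) unfolding Fp_subspace_def padd_def by auto
  have SN: "\<And>x. x \<in> S \<Longrightarrow> Npair n x \<in> S"
    using assms(9) unfolding simul_negacyclic_def Npair_def by auto
  have T0: "?T (\<lambda>i. 0, \<lambda>i. 0) = (\<lambda>i. 0)" unfolding to_Fp2_def by simp
  have image_eq: "image_R n eta A = vec_poly n ` (?T ` A)" for A
    unfolding image_R_def by auto
  obtain c0 c1 where c: "c0 \<in> Fp" "c1 \<in> Fp" "eta^2 + c1 * eta + c0 = 0"
    using eta unfolding root_of_irred_quadratic_def by blast
  let ?m = "negacyc_modulus n :: 'k poly"
  have direction1: "R_ideal n (image_R n eta S)" if lin: "code_linear n eta S"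
  proof -
    have sc: "(\<lambda>i. c * v i) \<in> ?T ` S" if "v \<in> ?T ` S" for c v
      using lin that unfolding code_linear_def Let_def by blast
    show ?thesis unfolding image_eq
    proof (rule ideal_of_closed[OF n])
      show "?T ` S \<subseteq> vecs n UNIV" using SP T_vecs by blast
      show "(\<lambda>i. 0) \<in> ?T ` S" using S0 T0 by (metis imageI)
    next
      fix u v assume "u \<in> ?T ` S" "v \<in> ?T ` S"
      then obtain x y where "x \<in> S" "y \<in> S" "u = ?T x" "v = ?T y" by blast
      hence "?T (padd x y) = (\<lambda>i. u i + v i)" "padd x y \<in> S" by (simp_all add: T_padd Sadd)
      thus "(\<lambda>i. u i + v i) \<in> ?T ` S" by (metis imageI)
    next
      fix c v assume "v \<in> ?T ` S" thus "(\<lambda>i. c * v i) \<in> ?T ` S" by (rule sc)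
    next
      fix v assume "v \<in> ?T ` S"
      then obtain x where "x \<in> S" "v = ?T x" by blast
      thus "negashift n v \<in> ?T ` S" using SN T_N by (metis imageI)
    qed
  qed
  have direction2: "code_linear n eta S" if I: "R_ideal n (image_R n eta S)"
  proof -
    have "(\<lambda>i. c * v i) \<in> ?T ` S" if v: "v \<in> ?T ` S" for c v
    proof -
      obtain x where x: "x \<in> S" "v = ?T x" using v by auto
      have f: "vec_poly n v \<in> image_R n eta S" using x unfolding image_R_def by auto
      have g: "[:c:] \<in> R_carrier n" unfolding R_carrier_def using n by simp
      have "([:c:] * vec_poly n v) mod ?m \<in> image_R n eta S"
        using I f g unfolding R_ideal_def by blast
      also have "([:c:] * vec_poly n v) mod ?m = vec_poly n (\<lambda>i. c * v i)"
        by (simp add: vec_poly_smult mod_poly_less degree_vec_poly degree_modulus n)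
      finally obtain y where y: "y \<in> S" "vec_poly n (?T y) = vec_poly n (\<lambda>i. c * v i)"
        unfolding image_R_def by auto
      have "?T y = (\<lambda>i. c * v i)"
        using vec_poly_inj[OF _ _ y(2)] T_vecs[of y n eta] T_vecs[of x n eta] SP x y(1)
        unfolding vecs_def by auto
      thus ?thesis using y(1) by (metis imageI)
    qed
    moreover have "(\<lambda>i. 0) \<in> ?T ` S" using S0 T0 by (metis imageI)
    moreover have "(\<lambda>i. u i + v i) \<in> ?T ` S" if uv: "u \<in> ?T ` S" "v \<in> ?T ` S" for u v
    proof -
      obtain x y where "x \<in> S" "y \<in> S" "u = ?T x" "v = ?T y" using uv by blast
      hence "?T (padd x y) = (\<lambda>i. u i + v i)" "padd x y \<in> S" by (simp_all add: T_padd Sadd)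
      thus ?thesis by (metis imageI)
    qed
    ultimately show ?thesis unfolding code_linear_def Let_def by blast
  qed
  have direction3: "R_ideal n (image_R n eta (symp_dual n S))" if lin: "code_linear n eta S"
  proof -
    let ?D = "symp_dual n S"
    have DP: "?D \<subseteq> ?P" unfolding symp_dual_def by auto
    have Dmem: "y \<in> ?D \<longleftrightarrow> y \<in> ?P \<and> (\<forall>s\<in>S. symp n s y = 0)" for y
      unfolding symp_dual_def by auto
    have SE: "Emul c0 c1 s \<in> S" if s: "s \<in> S" for s
    proof -
      have "(\<lambda>i. eta * ?T s i) \<in> ?T ` S"
        using lin s unfolding code_linear_def Let_def by blast
      then obtain s' where s': "s' \<in> S" "?T s' = (\<lambda>i. eta * ?T s i)" by auto
      have TT: "?T s' = ?T (Emul c0 c1 s)" using s'(2) T_Emul[OF c(3)] by simp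
      have "s' = Emul c0 c1 s"
      proof (rule T_inj[OF eta])
        show "s' \<in> ?P" using SP s'(1) by blast
        show "Emul c0 c1 s \<in> ?P" using SP s by (intro P_Emul[OF c(1,2)]) blast
      qed (rule TT)
      thus ?thesis using s' by simp
    qed
    have D0: "(\<lambda>i. 0, \<lambda>i. 0) \<in> ?D" unfolding Dmem using SP S0 by (auto simp: symp_zero)
    have Dadd: "padd x y \<in> ?D" if "x \<in> ?D" "y \<in> ?D" for x y
    proof -
      have "padd x y \<in> ?P" using that unfolding Dmem by (intro P_padd) auto
      moreover have "\<forall>s\<in>S. symp n s (padd x y) = 0" using that unfolding Dmem by (simp add: symp_padd)
      ultimately show ?thesis unfolding Dmem by blast
    qed
    have Dpsc: "psc c y \<in> ?D" if "c \<in> Fp" "y \<in> ?D" for c y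
    proof -
      have "psc c y \<in> ?P" using that unfolding Dmem by (intro P_psc) auto
      moreover have "\<forall>s\<in>S. symp n s (psc c y) = 0" using that unfolding Dmem by (simp add: symp_psc)
      ultimately show ?thesis unfolding Dmem by blast
    qed
    have DE: "Emul c0 c1 y \<in> ?D" if y: "y \<in> ?D" for y
    proof -
      have "symp n s (Emul c0 c1 y) = 0" if s: "s \<in> S" for s
      proof -
        have y': "\<forall>s\<in>S. symp n s y = 0" "y \<in> ?P" using y unfolding Dmem by auto
        have "symp n (Emul c0 c1 s) y = 0" "symp n s y = 0" using y' SE[OF s] s by auto
        thus ?thesis using symp_Emul[of n s c0 c1 y] by simp
      qed
      moreover have "Emul c0 c1 y \<in> ?P" using y unfolding Dmem by (intro P_Emul[OF c(1,2)]) auto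
      ultimately show ?thesis unfolding Dmem by blast
    qed
    have finS: "finite S"
    proof (rule finite_subset[OF SP])
      have "vecs n Fp \<subseteq> vecs n (UNIV::'k set)" unfolding vecs_def by auto
      hence "finite (vecs n (Fp::'k set))" using finite_vecs[of n] finite_subset by blast
      thus "finite ?P" by (intro finite_cartesian_product)
    qed
    have NS: "Npair n ` S = S"
    proof (rule endo_inj_surj[OF finS])
      show "Npair n ` S \<subseteq> S" using SN by auto
      show "inj_on (Npair n) S"
      proof (rule inj_onI)
        fix x y assume "x \<in> S" "y \<in> S" "Npair n x = Npair n y"
        hence xy: "x \<in> ?P" "y \<in> ?P" "negashift n (fst x) = negashift n (fst y)"
          "negashift n (snd x) = negashift n (snd y)" using SP unfolding Npair_def by auto
        have "fst x = fst y" by (rule negashift_inj[OF n _ _ xy(3)]) (use xy in auto)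
        moreover have "snd x = snd y" by (rule negashift_inj[OF n _ _ xy(4)]) (use xy in auto)
        ultimately show "x = y" by (simp add: prod_eq_iff)
      qed
    qed
    have DN: "Npair n y \<in> ?D" if y: "y \<in> ?D" for y
    proof -
      have "symp n s (Npair n y) = 0" if s: "s \<in> S" for s
      proof -
        obtain s' where s': "s' \<in> S" "s = Npair n s'" using s NS by (metis imageE)
        have "symp n s' y = 0" using y s'(1) unfolding Dmem by auto
        thus ?thesis using s'(2) by (simp add: symp_Npair[OF n])
      qed
      moreover have "Npair n y \<in> ?P" using y unfolding Dmem by (intro P_N) auto
      ultimately show ?thesis unfolding Dmem by blast
    qed
    show ?thesis unfolding image_eq
    proof (rule ideal_of_closed[OF n])
      show "?T ` ?D \<subseteq> vecs n UNIV" using DP T_vecs by blast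
      show "(\<lambda>i. 0) \<in> ?T ` ?D" using D0 T0 by (metis imageI)
    next
      fix u v assume "u \<in> ?T ` ?D" "v \<in> ?T ` ?D"
      then obtain x y where "x \<in> ?D" "y \<in> ?D" "u = ?T x" "v = ?T y" by blast
      hence "?T (padd x y) = (\<lambda>i. u i + v i)" "padd x y \<in> ?D" by (simp_all add: T_padd Dadd)
      thus "(\<lambda>i. u i + v i) \<in> ?T ` ?D" by (metis imageI)
    next
      fix c v assume v: "v \<in> ?T ` ?D"
      then obtain y where y: "y \<in> ?D" "v = ?T y" by auto
      obtain a b where ab: "a \<in> Fp" "b \<in> Fp" "c = a + eta * b"
        using eta_decomp[OF p card eta] by blast
      have "padd (psc a y) (psc b (Emul c0 c1 y)) \<in> ?D"
        by (intro Dadd Dpsc DE y ab)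
      moreover have "?T (padd (psc a y) (psc b (Emul c0 c1 y))) = (\<lambda>i. c * v i)"
        unfolding T_padd T_psc T_Emul[OF c(3)] y(2) ab(3) by (auto simp: fun_eq_iff algebra_simps)
      ultimately show "(\<lambda>i. c * v i) \<in> ?T ` ?D" by (metis imageI)
    next
      fix v assume "v \<in> ?T ` ?D"
      then obtain x where "x \<in> ?D" "v = ?T x" by blast
      thus "negashift n v \<in> ?T ` ?D" using DN T_N by (metis imageI)
    qed
  qed
  show ?thesis using direction1 direction2 direction3 by blast
qed

end
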